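(* In the D-RR setting under the strongly convex assumptions, fix an epoch $t$ and suppose $\alpha_t\le \frac{1}{2L}$. Then for every $\ell\in\{0,\dots,m-1\}$, $$\mathbb{E}\|\bar x_t^{\ell+1}-\bar x_*^{\ell+1}\|^2\le\Big(1-\frac{\alpha_t\mu}{2}\Big)\mathbb{E}\|\bar x_t^{\ell}-\bar x_*^{\ell}\|^2+2\alpha_t\sigma^2_{\mathrm{shuffle}}+\frac{2\alpha_tL^2}{n}\Big(\frac1\mu+\alpha_t\Big)\mathbb{E}\|\mathbf{x}_t^\ell-\mathbf{1}(\bar x_t^\ell)^\intercal\|^2 .$$
   Context: D-RR setting. Let $n,m,p\ge1$ be integers and $[k]=\{1,\dots,k\}$. For $i\in[n]$, $\ell\in[m]$ let $f_{i,\ell}:\mathbb{R}^p\to\mathbb{R}$ be differentiable; $f_i:=\frac1m\sum_{\ell=1}^m f_{i,\ell}$, $f:=\frac1n\sum_{i=1}^n f_i$. Let $W=(w_{ij})\in\mathbb{R}^{n\times n}$ be nonnegative, symmetric, with $W\mathbf 1=\mathbf 1$ ($\mathbf 1$ the all-ones vector), compliant with an undirected connected graph on $[n]$ (for $i\ne j$, $w_{ij}>0$ iff $\{i,j\}$ is an edge); $\rho_w$ denotes the spectral norm of $W-\frac1n\mathbf 1\mathbf 1^\intercal$ (so $\rho_w<1$). The D-RR algorithm: given deterministic initial points $x_{i,0}\in\mathbb{R}^p$ and stepsizes $\alpha_t>0$, at each epoch $t=0,1,2,\dots$ each agent $i$ draws a permutation $(\pi^i_0,\dots,\pi^i_{m-1})$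 of $[m]$ uniformly at random, independently across agents and epochs; sets $x^0_{i,t}=x_{i,t}$; for $\ell=0,\dots,m-1$ sets $x^{\ell+1}_{i,t}=\sum_{j=1}^n w_{ij}\big(x^\ell_{j,t}-\alpha_t\nabla f_{j,\pi^j_\ell}(x^\ell_{j,t})\big)$; and sets $x_{i,t+1}=x^m_{i,t}$. Notation: $\mathbf{x}_t^\ell\in\mathbb{R}^{n\times p}$ has $i$-th row $(x^\ell_{i,t})^\intercal$; $\bar x_t^\ell=\frac1n\sum_i x^\ell_{i,t}$; $\mathbf 1(\bar x_t^\ell)^\intercal$ is the $n\times p$ matrix all of whose rows equal $(\bar x_t^\ell)^\intercal$; $\|\cdot\|$ is the Euclidean norm for vectors and the Frobenius norm for matrices; $\mathbb{E}$ is expectation over all random permutations. Strongly convex assumptions: each $f_{i,\ell}$ is $\mu$-strongly convex and has $L$-Lipschitz gradient ($0<\mu\le L$); $x^*$ is the unique minimizer of $f$. For epoch $t$ (with the permutations of that epoch) define $\bar x_*^\ell:=x^*-\alpha_t\sum_{k=0}^{\ell-1}\frac1n\sum_{i=1}^n\nabla f_{i,\pi^i_k}(x^* )$ for $\ell=0,\dots,m$ (so $\bar x_*^0=\bar x_*^m=x^*$), $\bar s_\ell:=\frac1n\sum_{i=1}^n f_{i,\pi^i_\ell}$, and the shuffling variance $\sigma^2_{\mathrm{shuffle}}:=\max_{\ell=0,\dots,m-1}\mathbb{E}\big[\bar s_\ell(\bar x_*^\ell)-\bar s_\ell(x^* )-\langle\nabla\bar s_\ell(x^* ),\bar x_*^\ell-x^*\rangle\big]$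 (which depends on $\alpha_t$). *)

theory Defs
  imports "HOL-Analysis.Analysis" "HOL-Combinatorics.Permutations" "HOL-Probability.Probability"
begin

definition strongly_convex :: "real \<Rightarrow> ('a::real_inner \<Rightarrow> real) \<Rightarrow> bool" where
  "strongly_convex \<mu> g \<longleftrightarrow> convex_on UNIV (\<lambda>x. g x - \<mu> / 2 * (norm x)\<^sup>2)"

definition support_connected :: "nat \<Rightarrow> (nat \<Rightarrow> nat \<Rightarrow> real) \<Rightarrow> bool" where
  "support_connected n w \<longleftrightarrow>
     (\<forall>i<n. \<forall>j<n. (\<lambda>a b. a < n \<and> b < n \<and> a \<noteq> b \<and> w a b > 0)\<^sup>*\<^sup>* i j)"

text \<open>One epoch of D-RR: inner iterates. Agents are 0..n-1, samples 0..m-1.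
  sig e i is the permutation drawn by agent i at epoch e; G i l is the gradient of f_{i,l}.\<close>
fun drr_inner :: "nat \<Rightarrow> (nat \<Rightarrow> nat \<Rightarrow> real) \<Rightarrow> (nat \<Rightarrow> nat \<Rightarrow> 'a::real_vector \<Rightarrow> 'a)
   \<Rightarrow> real \<Rightarrow> (nat \<Rightarrow> nat \<Rightarrow> nat) \<Rightarrow> (nat \<Rightarrow> 'a) \<Rightarrow> nat \<Rightarrow> (nat \<Rightarrow> 'a)" where
  "drr_inner n w G a pe X0 0 = X0"
| "drr_inner n w G a pe X0 (Suc l) =
     (\<lambda>i. \<Sum>j<n. w i j *\<^sub>R (drr_inner n w G a pe X0 l j - a *\<^sub>R G j (pe j l) (drr_inner n w G a pe X0 l j)))"

fun drr_outer :: "nat \<Rightarrow> nat \<Rightarrow> (nat \<Rightarrow> nat \<Rightarrow> real) \<Rightarrow> (nat \<Rightarrow> nat \<Rightarrow> 'a::real_vector \<Rightarrow> 'a)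
   \<Rightarrow> (nat \<Rightarrow> real) \<Rightarrow> (nat \<Rightarrow> 'a) \<Rightarrow> (nat \<Rightarrow> nat \<Rightarrow> nat \<Rightarrow> nat) \<Rightarrow> nat \<Rightarrow> (nat \<Rightarrow> 'a)" where
  "drr_outer n m w G \<alpha> x0 sig 0 = x0"
| "drr_outer n m w G \<alpha> x0 sig (Suc e) =
     drr_inner n w G (\<alpha> e) (sig e) (drr_outer n m w G \<alpha> x0 sig e) m"

definition drr_x :: "nat \<Rightarrow> nat \<Rightarrow> (nat \<Rightarrow> nat \<Rightarrow> real) \<Rightarrow> (nat \<Rightarrow> nat \<Rightarrow> 'a::real_vector \<Rightarrow> 'a)
   \<Rightarrow> (nat \<Rightarrow> real) \<Rightarrow> (nat \<Rightarrow> 'a) \<Rightarrow> (nat \<Rightarrow> nat \<Rightarrow> nat \<Rightarrow> nat) \<Rightarrow> nat \<Rightarrow> nat \<Rightarrow> nat \<Rightarrow> 'a" where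
  "drr_x n m w G \<alpha> x0 sig e l i =
     drr_inner n w G (\<alpha> e) (sig e) (drr_outer n m w G \<alpha> x0 sig e) l i"

text \<open>The uniform distribution on this finite
  set is the product of independent uniform permutations.\<close>
definition perm_space :: "nat \<Rightarrow> nat \<Rightarrow> nat \<Rightarrow> (nat \<Rightarrow> nat \<Rightarrow> nat \<Rightarrow> nat) set" where
  "perm_space n m t = {sig. (\<forall>e\<le>t. \<forall>i<n. sig e i permutes {..<m}) \<and>
                            (\<forall>e i. (t < e \<or> n \<le> i) \<longrightarrow> sig e i = id)}"

definition perm_pmf :: "nat \<Rightarrow> nat \<Rightarrow> nat \<Rightarrow> (nat \<Rightarrow> nat \<Rightarrow> nat \<Rightarrow> nat) pmf" where
  "perm_pmf n m t = pmf_of_set (perm_space n m t)"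

definition avg :: "nat \<Rightarrow> (nat \<Rightarrow> 'a::real_vector) \<Rightarrow> 'a" where
  "avg n X = (1 / real n) *\<^sub>R (\<Sum>i<n. X i)"

definition xstar_seq :: "nat \<Rightarrow> (nat \<Rightarrow> nat \<Rightarrow> 'a::real_vector \<Rightarrow> 'a) \<Rightarrow> real \<Rightarrow> 'a
   \<Rightarrow> (nat \<Rightarrow> nat \<Rightarrow> nat) \<Rightarrow> nat \<Rightarrow> 'a" where
  "xstar_seq n G a xs pe l = xs - a *\<^sub>R (\<Sum>k<l. avg n (\<lambda>i. G i (pe i k) xs))"

definition breg :: "nat \<Rightarrow> (nat \<Rightarrow> nat \<Rightarrow> 'a::real_inner \<Rightarrow> real) \<Rightarrow> (nat \<Rightarrow> nat \<Rightarrow> 'a \<Rightarrow> 'a)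
   \<Rightarrow> real \<Rightarrow> 'a \<Rightarrow> (nat \<Rightarrow> nat \<Rightarrow> nat) \<Rightarrow> nat \<Rightarrow> real" where
  "breg n f G a xs pe l =
    (let sbar = (\<lambda>y. (1 / real n) * (\<Sum>i<n. f i (pe i l) y));
         gbar = avg n (\<lambda>i. G i (pe i l) xs);
         z = xstar_seq n G a xs pe l
     in sbar z - sbar xs - inner gbar (z - xs))"

definition sigma_shuffle :: "nat \<Rightarrow> nat \<Rightarrow> (nat \<Rightarrow> nat \<Rightarrow> 'a::real_inner \<Rightarrow> real) \<Rightarrow> (nat \<Rightarrow> nat \<Rightarrow> 'a \<Rightarrow> 'a)
   \<Rightarrow> (nat \<Rightarrow> real) \<Rightarrow> 'a \<Rightarrow> nat \<Rightarrow> real" where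
  "sigma_shuffle n m f G \<alpha> xs t =
     Max ((\<lambda>l. measure_pmf.expectation (perm_pmf n m t) (\<lambda>sig. breg n f G (\<alpha> t) xs (sig t) l)) ` {..<m})"

end

theory Submission
  imports Defs
begin

lemma sc_first_order:
  fixes F :: "'a::real_inner \<Rightarrow> real"
  assumes sc: "strongly_convex \<mu> F"
    and dF: "\<And>x. (F has_derivative (\<lambda>h. inner (g x) h)) (at x)"
  shows "F v \<ge> F u + inner (g u) (v - u) + \<mu>/2 * (norm (v-u))\<^sup>2"
proof -
  define d where "d = v - u"
  define \<phi> where "\<phi> t = F (u + t *\<^sub>R d) - \<mu>/2 * inner (u + t *\<^sub>R d) (u + t *\<^sub>R d)" for t :: real
  have cvx: "convex_on UNIV (\<lambda>x. F x - \<mu> / 2 * (norm x)\<^sup>2)" using sc by (simp add: strongly_convex_def)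
  have phi_eq: "\<phi> t = (\<lambda>x. F x - \<mu> / 2 * (norm x)\<^sup>2) (u + t *\<^sub>R d)" for t
    by (simp add: \<phi>_def power2_norm_eq_inner)
  have "convex_on UNIV \<phi>"
  proof (rule convex_onI)
    fix s :: real and a b :: real assume s: "0 < s" "s < 1"
    have e: "u + ((1 - s) *\<^sub>R a + s *\<^sub>R b) *\<^sub>R d = (1 - s) *\<^sub>R (u + a *\<^sub>R d) + s *\<^sub>R (u + b *\<^sub>R d)"
      by (simp add: algebra_simps)
    show "\<phi> ((1 - s) *\<^sub>R a + s *\<^sub>R b) \<le> (1 - s) * \<phi> a + s * \<phi> b"
      unfolding phi_eq e using convex_onD[OF cvx, of s "u + a *\<^sub>R d" "u + b *\<^sub>R d"] s by simp
  qed simp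
  have der: "(\<phi> has_field_derivative (inner (g u) d - \<mu> * inner u d)) (at 0)"
  proof -
    have h1: "((\<lambda>t::real. u + t *\<^sub>R d) has_derivative (\<lambda>s. s *\<^sub>R d)) (at 0)"
      by (auto intro!: derivative_eq_intros)
    have h2: "((\<lambda>t. F (u + t *\<^sub>R d)) has_derivative (\<lambda>s. inner (g u) (s *\<^sub>R d))) (at 0)"
      using has_derivative_compose[OF h1, of F "\<lambda>h. inner (g (u + 0 *\<^sub>R d)) h"] dF by simp
    have h3: "((\<lambda>t::real. inner (u + t *\<^sub>R d) (u + t *\<^sub>R d)) has_derivative (\<lambda>s. 2 * s * inner u d)) (at 0)"
      by (auto intro!: derivative_eq_intros simp: inner_commute)
    have "(\<phi> has_derivative (\<lambda>s. inner (g u) (s *\<^sub>R d) - \<mu>/2 * (2 * s * inner u d))) (at 0)"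
      unfolding \<phi>_def by (intro derivative_intros h2 h3)
    then show ?thesis unfolding has_field_derivative_def
      by (rule has_derivative_eq_rhs) (auto simp: algebra_simps)
  qed
  have "\<phi> 1 - \<phi> 0 \<ge> (inner (g u) d - \<mu> * inner u d) * (1 - 0)"
    by (rule convex_on_imp_above_tangent[OF \<open>convex_on UNIV \<phi>\<close>]) (use der in auto)
  moreover have "inner v v = inner u u + 2 * inner u d + inner d d"
    by (simp add: d_def algebra_simps inner_commute)
  moreover have "\<phi> 1 = F v - \<mu>/2 * inner v v" "\<phi> 0 = F u - \<mu>/2 * inner u u"
    by (simp_all add: \<phi>_def d_def)
  moreover have "(norm (v-u))\<^sup>2 = inner d d" by (simp add: d_def power2_norm_eq_inner)
  ultimately show ?thesis
    by (simp add: d_def[symmetric] algebra_simps)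
qed
lemma descent:
  fixes F :: "'a::real_inner \<Rightarrow> real"
  assumes dF: "\<And>x. (F has_derivative (\<lambda>h. inner (g x) h)) (at x)"
    and lip: "\<And>x y. norm (g x - g y) \<le> L * norm (x - y)"
  shows "F v \<le> F u + inner (g u) (v - u) + L/2 * (norm (v-u))\<^sup>2"
proof -
  define d where "d = v - u"
  define \<psi> where "\<psi> t = F (u + t *\<^sub>R d) - t * inner (g u) d - L/2 * t\<^sup>2 * inner d d" for t :: real
  define \<psi>' where "\<psi>' t = inner (g (u + t *\<^sub>R d)) d - inner (g u) d - L * t * inner d d" for t :: real
  have der: "DERIV \<psi> t :> \<psi>' t" for t
  proof -
    have h1: "((\<lambda>t::real. u + t *\<^sub>R d) has_derivative (\<lambda>s. s *\<^sub>R d)) (at t)"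
      by (auto intro!: derivative_eq_intros)
    have h2: "((\<lambda>t. F (u + t *\<^sub>R d)) has_derivative (\<lambda>s. inner (g (u + t *\<^sub>R d)) (s *\<^sub>R d))) (at t)"
      using has_derivative_compose[OF h1, of F "\<lambda>h. inner (g (u + t *\<^sub>R d)) h"] dF by simp
    have "(\<psi> has_derivative (\<lambda>s. inner (g (u + t *\<^sub>R d)) (s *\<^sub>R d) - s * inner (g u) d - L/2 * (2 * t * s) * inner d d)) (at t)"
      unfolding \<psi>_def by (auto intro!: derivative_eq_intros h2)
    then show ?thesis unfolding has_field_derivative_def \<psi>'_def
      by (rule has_derivative_eq_rhs) (auto simp: algebra_simps)
  qed
  obtain z where z: "0 < z" "z < 1" "\<psi> 1 - \<psi> 0 = (1 - 0) * \<psi>' z"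
    using MVT2[of 0 1 \<psi> \<psi>'] der by auto
  have "inner (g (u + z *\<^sub>R d) - g u) d \<le> norm (g (u + z *\<^sub>R d) - g u) * norm d"
    by (rule norm_cauchy_schwarz)
  also have "\<dots> \<le> (L * (z * norm d)) * norm d"
    using lip[of "u + z *\<^sub>R d" u] z by (intro mult_right_mono) auto
  also have "\<dots> = L * z * inner d d" by (simp add: power2_norm_eq_inner[symmetric] power2_eq_square)
  finally have "\<psi>' z \<le> 0" by (simp add: \<psi>'_def inner_diff_left)
  with z have "\<psi> 1 \<le> \<psi> 0" by simp
  moreover have "(norm (v-u))\<^sup>2 = inner d d" by (simp add: d_def power2_norm_eq_inner)
  ultimately show ?thesis by (simp add: \<psi>_def d_def)
qed

lemma cocoercive:
  fixes F :: "'a::real_inner \<Rightarrow> real"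
  assumes dF: "\<And>x. (F has_derivative (\<lambda>h. inner (g x) h)) (at x)"
    and lip: "\<And>x y. norm (g x - g y) \<le> L * norm (x - y)"
    and fo: "\<And>x y. F y \<ge> F x + inner (g x) (y - x)"
    and L: "L > 0"
  shows "F v \<ge> F u + inner (g u) (v - u) + 1/(2*L) * (norm (g v - g u))\<^sup>2"
proof -
  define dd where "dd = g v - g u"
  define w where "w = v - (1/L) *\<^sub>R dd"
  have A: "F w \<le> F v + inner (g v) (w - v) + L/2 * (norm (w - v))\<^sup>2" by (rule descent[OF dF lip])
  have B: "F w \<ge> F u + inner (g u) (w - u)" by (rule fo)
  have wv: "w - v = - (1/L) *\<^sub>R dd" by (simp add: w_def)
  have wu: "w - u = (v - u) - (1/L) *\<^sub>R dd" by (simp add: w_def)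
  have "(norm (w - v))\<^sup>2 = (1/L)\<^sup>2 * (norm dd)\<^sup>2" using L by (simp add: wv power_divide)
  then have n2: "(norm (w - v))\<^sup>2 = (1/L)\<^sup>2 * inner dd dd" by (simp add: power2_norm_eq_inner)
  have i1: "inner (g v) (w - v) = - (1/L) * inner (g v) dd" by (simp add: wv)
  have i2: "inner (g u) (w - u) = inner (g u) (v - u) - (1/L) * inner (g u) dd" by (simp add: wu inner_diff_right)
  have i3: "inner (g v) dd - inner (g u) dd = inner dd dd" by (simp add: dd_def inner_diff_left)
  have "F u + inner (g u) (v - u) - (1/L) * inner (g u) dd \<le> F v - (1/L) * inner (g v) dd + L/2 * ((1/L)\<^sup>2 * inner dd dd)"
    using A B unfolding n2 i1 i2 by linarith
  then have "F u + inner (g u) (v - u) + (1/L) * (inner (g v) dd - inner (g u) dd) - L/2 * ((1/L)\<^sup>2 * inner dd dd) \<le> F v"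
    by (simp add: algebra_simps)
  moreover have "(1/L) * inner dd dd - L/2 * ((1/L)\<^sup>2 * inner dd dd) = 1/(2*L) * inner dd dd"
    using L by (simp add: field_simps power2_eq_square)
  ultimately show ?thesis using i3 by (simp add: dd_def[symmetric] power2_norm_eq_inner)
qed


lemma norm_avg_sq:
  fixes v :: "nat \<Rightarrow> 'a::real_normed_vector"
  assumes n: "n \<ge> 1"
  shows "(norm (avg n v))\<^sup>2 \<le> (1 / real n) * (\<Sum>i<n. (norm (v i))\<^sup>2)"
proof -
  have a: "norm (\<Sum>i<n. v i) \<le> (\<Sum>i<n. norm (v i))" by (rule norm_sum)
  have b: "(\<Sum>i<n. norm (v i))\<^sup>2 \<le> (\<Sum>i<n. (norm (v i))\<^sup>2) * real n"
    using sum_squared_le_sum_of_squares[of "\<lambda>i. norm (v i)" "{..<n}"] by simp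
  have "(norm (\<Sum>i<n. v i))\<^sup>2 \<le> (\<Sum>i<n. norm (v i))\<^sup>2"
    using a by (intro power_mono) auto
  with b have c: "(norm (\<Sum>i<n. v i))\<^sup>2 \<le> (\<Sum>i<n. (norm (v i))\<^sup>2) * real n" by linarith
  have "(norm (avg n v))\<^sup>2 = (1 / real n)\<^sup>2 * (norm (\<Sum>i<n. v i))\<^sup>2"
    by (simp add: avg_def power_divide)
  also have "\<dots> \<le> (1 / real n)\<^sup>2 * ((\<Sum>i<n. (norm (v i))\<^sup>2) * real n)"
    using c by (intro mult_left_mono) auto
  also have "\<dots> = (1 / real n) * (\<Sum>i<n. (norm (v i))\<^sup>2)"
    using n by (simp add: power2_eq_square field_simps)
  finally show ?thesis .
qed

lemma avg_diff: "avg n (\<lambda>i. p i - q i) = avg n p - avg n (q :: nat \<Rightarrow> 'a::real_vector)"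
  by (simp add: avg_def sum_subtractf scaleR_diff_right)

lemma inner_avg_left: "inner (avg n v) r = (1 / real n) * (\<Sum>i<n. inner (v i) r)"
  by (simp add: avg_def inner_sum_left)

lemma pathwise:
  fixes F :: "nat \<Rightarrow> 'a::real_inner \<Rightarrow> real" and g :: "nat \<Rightarrow> 'a \<Rightarrow> 'a" and x :: "nat \<Rightarrow> 'a"
  assumes n: "n \<ge> 1"
    and dF: "\<And>i x. i < n \<Longrightarrow> (F i has_derivative (\<lambda>h. inner (g i x) h)) (at x)"
    and sc: "\<And>i. i < n \<Longrightarrow> strongly_convex \<mu> (F i)"
    and lip: "\<And>i x y. i < n \<Longrightarrow> norm (g i x - g i y) \<le> L * norm (x - y)"
    and mu: "0 < \<mu>" "\<mu> \<le> L" and a: "0 < a" "a \<le> 1 / (2 * L)"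
  shows "(norm ((avg n x - a *\<^sub>R avg n (\<lambda>i. g i (x i))) - (z - a *\<^sub>R avg n (\<lambda>i. g i xs))))\<^sup>2
     \<le> (1 - a * \<mu> / 2) * (norm (avg n x - z))\<^sup>2
       + 2 * a * ((1 / real n) * (\<Sum>i<n. F i z) - (1 / real n) * (\<Sum>i<n. F i xs)
                   - inner (avg n (\<lambda>i. g i xs)) (z - xs))
       + 2 * a * L\<^sup>2 / real n * (1 / \<mu> + a) * (\<Sum>i<n. (norm (x i - avg n x))\<^sup>2)"
proof -
  define y where "y = avg n x"
  define r where "r = y - z"
  define H where "H = avg n (\<lambda>i. g i y - g i xs)"
  define e where "e = avg n (\<lambda>i. g i (x i) - g i y)"
  define Dv where "Dv = (1 / real n) * (\<Sum>i<n. F i z) - (1 / real n) * (\<Sum>i<n. F i xs)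
                   - inner (avg n (\<lambda>i. g i xs)) (z - xs)"
  define Q where "Q = (1 / real n) * (\<Sum>i<n. (norm (g i y - g i xs))\<^sup>2)"
  define C where "C = (\<Sum>i<n. (norm (x i - y))\<^sup>2)"
  have L: "L > 0" using mu by linarith
  have vec: "(avg n x - a *\<^sub>R avg n (\<lambda>i. g i (x i))) - (z - a *\<^sub>R avg n (\<lambda>i. g i xs)) = r - a *\<^sub>R H - a *\<^sub>R e"
  proof -
    have "avg n (\<lambda>i. g i (x i)) - avg n (\<lambda>i. g i xs) = H + e"
      unfolding H_def e_def avg_diff by simp
    then show ?thesis unfolding r_def y_def by (simp add: algebra_simps flip: scaleR_diff_right)
  qed
  have expand: "(norm (r - a *\<^sub>R H - a *\<^sub>R e))\<^sup>2 = (norm r)\<^sup>2 - 2*a*inner r H - 2*a*inner r e + a\<^sup>2*(norm H)\<^sup>2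
       + 2*a\<^sup>2 * inner H e + a\<^sup>2 * (norm e)\<^sup>2"
    unfolding power2_norm_eq_inner by (simp add: inner_diff_left inner_diff_right inner_commute power2_eq_square algebra_simps)
  have f1: "-2*a*inner r e \<le> a*\<mu>/2*(norm r)\<^sup>2 + 2*a/\<mu>*(norm e)\<^sup>2"
  proof -
    have "0 \<le> (norm ((\<mu>/2) *\<^sub>R r + e))\<^sup>2" by simp
    also have "\<dots> = (\<mu>/2)\<^sup>2 * (norm r)\<^sup>2 + \<mu> * inner r e + (norm e)\<^sup>2"
      unfolding power2_norm_eq_inner by (simp add: inner_add_left inner_add_right inner_commute power2_eq_square algebra_simps)
    finally have "0 \<le> (\<mu>/2)\<^sup>2 * (norm r)\<^sup>2 + \<mu> * inner r e + (norm e)\<^sup>2" .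
    then have "0 \<le> (2*a/\<mu>) * ((\<mu>/2)\<^sup>2 * (norm r)\<^sup>2 + \<mu> * inner r e + (norm e)\<^sup>2)"
      using a mu by (intro mult_nonneg_nonneg) auto
    also have "\<dots> = a*\<mu>/2*(norm r)\<^sup>2 + 2*a*inner r e + 2*a/\<mu>*(norm e)\<^sup>2"
      using mu by (simp add: field_simps power2_eq_square)
    finally show ?thesis by linarith
  qed
  have f2: "2*a\<^sup>2*inner H e \<le> a\<^sup>2*(norm H)\<^sup>2 + a\<^sup>2*(norm e)\<^sup>2"
  proof -
    have "0 \<le> (norm (H - e))\<^sup>2" by simp
    also have "\<dots> = (norm H)\<^sup>2 - 2 * inner H e + (norm e)\<^sup>2"
      unfolding power2_norm_eq_inner by (simp add: inner_diff_left inner_diff_right inner_commute)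
    finally have "2 * inner H e \<le> (norm H)\<^sup>2 + (norm e)\<^sup>2" by linarith
    then have "a\<^sup>2 * (2 * inner H e) \<le> a\<^sup>2 * ((norm H)\<^sup>2 + (norm e)\<^sup>2)" by (intro mult_left_mono) auto
    then show ?thesis by (simp add: algebra_simps)
  qed
  have per_i: "inner (g i y - g i xs) r \<ge> \<mu>/2 * (norm r)\<^sup>2 + 1/(2*L) * (norm (g i y - g i xs))\<^sup>2
        - (F i z - F i xs - inner (g i xs) (z - xs))" if i: "i < n" for i
  proof -
    have d1: "F i z \<ge> F i y + inner (g i y) (z - y) + \<mu>/2 * (norm (z - y))\<^sup>2"
      by (rule sc_first_order[OF sc[OF i] dF[OF i]])
    have fo: "F i v \<ge> F i u + inner (g i u) (v - u)" for u v
    proof -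
      have "F i v \<ge> F i u + inner (g i u) (v - u) + \<mu>/2 * (norm (v - u))\<^sup>2"
        by (rule sc_first_order[OF sc[OF i] dF[OF i]])
      moreover have "\<mu>/2 * (norm (v - u))\<^sup>2 \<ge> 0" using mu by simp
      ultimately show ?thesis by linarith
    qed
    have d2: "F i y \<ge> F i xs + inner (g i xs) (y - xs) + 1/(2*L) * (norm (g i y - g i xs))\<^sup>2"
      by (rule cocoercive[OF dF[OF i] lip[OF i] fo L])
    have nz: "norm (z - y) = norm r" by (simp add: r_def norm_minus_commute)
    have tp: "inner (g i y - g i xs) r = (F i z - F i y - inner (g i y) (z - y))
               + (F i y - F i xs - inner (g i xs) (y - xs)) - (F i z - F i xs - inner (g i xs) (z - xs))"
      by (simp add: r_def inner_diff_left inner_diff_right algebra_simps)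
    show ?thesis using d1 d2 tp unfolding nz by linarith
  qed
  have f3: "inner r H \<ge> \<mu>/2 * (norm r)\<^sup>2 + 1/(2*L) * Q - Dv"
  proof -
    have "inner r H = (1 / real n) * (\<Sum>i<n. inner (g i y - g i xs) r)"
      unfolding H_def by (simp add: inner_commute[of r] inner_avg_left)
    also have "\<dots> \<ge> (1 / real n) * (\<Sum>i<n. \<mu>/2 * (norm r)\<^sup>2 + 1/(2*L) * (norm (g i y - g i xs))\<^sup>2
        - (F i z - F i xs - inner (g i xs) (z - xs)))"
      using per_i by (intro mult_left_mono sum_mono) auto
    finally have *: "inner r H \<ge> (1 / real n) * (\<Sum>i<n. \<mu>/2 * (norm r)\<^sup>2 + 1/(2*L) * (norm (g i y - g i xs))\<^sup>2
        - (F i z - F i xs - inner (g i xs) (z - xs)))" .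
    have "(1 / real n) * (\<Sum>i<n. \<mu>/2 * (norm r)\<^sup>2 + 1/(2*L) * (norm (g i y - g i xs))\<^sup>2
        - (F i z - F i xs - inner (g i xs) (z - xs)))
       = \<mu>/2 * (norm r)\<^sup>2 + 1/(2*L) * Q - Dv"
    proof -
      have s1: "(\<Sum>i<n. \<mu>/2 * (norm r)\<^sup>2 + 1/(2*L) * (norm (g i y - g i xs))\<^sup>2
        - (F i z - F i xs - inner (g i xs) (z - xs))) = real n * (\<mu>/2 * (norm r)\<^sup>2)
          + 1/(2*L) * (\<Sum>i<n. (norm (g i y - g i xs))\<^sup>2)
          - ((\<Sum>i<n. F i z) - (\<Sum>i<n. F i xs) - (\<Sum>i<n. inner (g i xs) (z - xs)))"
        by (simp add: sum.distrib sum_subtractf sum_distrib_left)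
      have s3: "inner (avg n (\<lambda>i. g i xs)) (z - xs) = (1 / real n) * (\<Sum>i<n. inner (g i xs) (z - xs))"
        by (rule inner_avg_left)
      have np: "real n > 0" using n by simp
      show ?thesis unfolding s1 Q_def Dv_def s3 using np by (simp add: field_simps)
    qed
    with * show ?thesis by simp
  qed
  have f4: "(norm H)\<^sup>2 \<le> Q" unfolding H_def Q_def by (rule norm_avg_sq[OF n])
  have f5: "(norm e)\<^sup>2 \<le> L\<^sup>2 / real n * C"
  proof -
    have "(norm e)\<^sup>2 \<le> (1 / real n) * (\<Sum>i<n. (norm (g i (x i) - g i y))\<^sup>2)"
      unfolding e_def by (rule norm_avg_sq[OF n])
    also have "\<dots> \<le> (1 / real n) * (\<Sum>i<n. L\<^sup>2 * (norm (x i - y))\<^sup>2)"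
    proof (intro mult_left_mono sum_mono)
      fix i assume "i \<in> {..<n}"
      then have "norm (g i (x i) - g i y) \<le> L * norm (x i - y)" using lip by auto
      then have "(norm (g i (x i) - g i y))\<^sup>2 \<le> (L * norm (x i - y))\<^sup>2" by (intro power_mono) auto
      then show "(norm (g i (x i) - g i y))\<^sup>2 \<le> L\<^sup>2 * (norm (x i - y))\<^sup>2" by (simp add: power_mult_distrib)
    qed auto
    also have "\<dots> = L\<^sup>2 / real n * C" by (simp add: C_def sum_distrib_left[symmetric])
    finally show ?thesis .
  qed
  have Q0: "Q \<ge> 0" by (simp add: Q_def sum_nonneg)
  have g3: "-2*a*inner r H \<le> -a*\<mu>*(norm r)\<^sup>2 - a/L*Q + 2*a*Dv"
  proof -
    have "a * (\<mu>/2 * (norm r)\<^sup>2 + 1/(2*L) * Q - Dv) \<le> a * inner r H" using f3 a by (intro mult_left_mono) auto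
    then show ?thesis by (simp add: algebra_simps)
  qed
  have g4: "2*a\<^sup>2*(norm H)\<^sup>2 \<le> a/L*Q"
  proof -
    have "2*a\<^sup>2*(norm H)\<^sup>2 \<le> 2*a\<^sup>2*Q" using f4 by (intro mult_left_mono) auto
    also have "\<dots> = (2*a) * a * Q" by (simp add: power2_eq_square)
    also have "\<dots> \<le> (1/L) * a * Q" using a Q0 L
      by (intro mult_right_mono) (auto simp: field_simps)
    finally show ?thesis by simp
  qed
  have g5: "(2*a/\<mu> + 2*a\<^sup>2) * (norm e)\<^sup>2 \<le> (2*a/\<mu> + 2*a\<^sup>2) * (L\<^sup>2 / real n * C)"
    using f5 a mu by (intro mult_left_mono) auto
  have fin: "2 * a * L\<^sup>2 / real n * (1 / \<mu> + a) * C = (2*a/\<mu> + 2*a\<^sup>2) * (L\<^sup>2 / real n * C)"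
    using mu n by (simp add: field_simps power2_eq_square)
  have "(norm (r - a *\<^sub>R H - a *\<^sub>R e))\<^sup>2 \<le> (1 - a * \<mu> / 2) * (norm r)\<^sup>2 + 2 * a * Dv
          + (2*a/\<mu> + 2*a\<^sup>2) * (L\<^sup>2 / real n * C)"
    using expand f1 f2 g3 g4 g5 by (simp add: algebra_simps)
  then show ?thesis
    unfolding vec fin[symmetric] by (simp add: y_def r_def C_def Dv_def)
qed


lemma perm_space_finite: "finite (perm_space n m t)"
proof -
  define \<Phi> where "\<Phi> sig = restrict (\<lambda>(e,i). sig e i) ({..t} \<times> {..<n})" for sig :: "nat \<Rightarrow> nat \<Rightarrow> nat \<Rightarrow> nat"
  have sub: "\<Phi> ` perm_space n m t \<subseteq> PiE ({..t} \<times> {..<n}) (\<lambda>_. {p. p permutes {..<m}})"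
    by (auto simp: \<Phi>_def perm_space_def)
  have fin: "finite (PiE ({..t} \<times> {..<n}) (\<lambda>_. {p. p permutes {..<m}}))"
    by (intro finite_PiE) (auto intro: finite_permutations)
  have inj: "inj_on \<Phi> (perm_space n m t)"
  proof (rule inj_onI)
    fix s1 s2 assume s1: "s1 \<in> perm_space n m t" and s2: "s2 \<in> perm_space n m t" and eq: "\<Phi> s1 = \<Phi> s2"
    show "s1 = s2"
    proof (intro ext)
      fix e i k
      show "s1 e i k = s2 e i k"
      proof (cases "e \<le> t \<and> i < n")
        case True
        then have "s1 e i = s2 e i" using fun_cong[OF eq, of "(e,i)"] by (simp add: \<Phi>_def)
        then show ?thesis by simp
      next
        case False
        then show ?thesis using s1 s2 by (auto simp: perm_space_def not_le)
      qed
    qed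
  qed
  show ?thesis using finite_subset[OF sub fin] inj finite_image_iff by blast
qed

lemma perm_space_nonempty: "perm_space n m t \<noteq> {}"
proof -
  have "(\<lambda>e i. id) \<in> perm_space n m t" by (simp add: perm_space_def permutes_id)
  then show ?thesis by blast
qed

lemma avg_mix:
  fixes v :: "nat \<Rightarrow> 'a::real_vector"
  assumes w_sym: "\<And>i j. i < n \<Longrightarrow> j < n \<Longrightarrow> w i j = w j i"
    and w_stoch: "\<And>i. i < n \<Longrightarrow> (\<Sum>j<n. w i j) = 1"
  shows "avg n (\<lambda>i. \<Sum>j<n. w i j *\<^sub>R v j) = avg n v"
proof -
  have "(\<Sum>i<n. \<Sum>j<n. w i j *\<^sub>R v j) = (\<Sum>j<n. \<Sum>i<n. w i j *\<^sub>R v j)" by (rule sum.swap)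
  also have "\<dots> = (\<Sum>j<n. (\<Sum>i<n. w i j) *\<^sub>R v j)" by (simp add: scaleR_sum_left)
  also have "\<dots> = (\<Sum>j<n. v j)"
  proof (rule sum.cong)
    fix j assume j: "j \<in> {..<n}"
    have "(\<Sum>i<n. w i j) = (\<Sum>i<n. w j i)" using w_sym j by (intro sum.cong) auto
    then show "(\<Sum>i<n. w i j) *\<^sub>R v j = v j" using w_stoch j by simp
  qed simp
  finally show ?thesis by (simp add: avg_def)
qed

theorem lemma5:
  fixes n m t :: nat
    and f :: "nat \<Rightarrow> nat \<Rightarrow> real^'p \<Rightarrow> real"
    and G :: "nat \<Rightarrow> nat \<Rightarrow> real^'p \<Rightarrow> real^'p"
    and w :: "nat \<Rightarrow> nat \<Rightarrow> real"
    and \<alpha> :: "nat \<Rightarrow> real"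
    and x0 :: "nat \<Rightarrow> real^'p"
    and xs :: "real^'p"
    and \<mu> L :: real
  assumes n_pos: "n \<ge> 1" and m_pos: "m \<ge> 1"
    and grad: "\<And>i l x. i < n \<Longrightarrow> l < m \<Longrightarrow> (f i l has_derivative (\<lambda>h. inner (G i l x) h)) (at x)"
    and mu_pos: "0 < \<mu>" and mu_le_L: "\<mu> \<le> L"
    and strong: "\<And>i l. i < n \<Longrightarrow> l < m \<Longrightarrow> strongly_convex \<mu> (f i l)"
    and lips: "\<And>i l x y. i < n \<Longrightarrow> l < m \<Longrightarrow> norm (G i l x - G i l y) \<le> L * norm (x - y)"
    and w_nonneg: "\<And>i j. i < n \<Longrightarrow> j < n \<Longrightarrow> 0 \<le> w i j"
    and w_sym: "\<And>i j. i < n \<Longrightarrow> j < n \<Longrightarrow> w i j = w j i"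
    and w_stoch: "\<And>i. i < n \<Longrightarrow> (\<Sum>j<n. w i j) = 1"
    and w_conn: "support_connected n w"
    and alpha_pos: "\<And>e. 0 < \<alpha> e"
    and xs_min: "\<And>x. (1 / real n) * (\<Sum>i<n. (1 / real m) * (\<Sum>l<m. f i l xs))
                     \<le> (1 / real n) * (\<Sum>i<n. (1 / real m) * (\<Sum>l<m. f i l x))"
    and alpha_le: "\<alpha> t \<le> 1 / (2 * L)"
    and l_lt: "l < m"
  shows "measure_pmf.expectation (perm_pmf n m t)
           (\<lambda>sig. (norm (avg n (drr_x n m w G \<alpha> x0 sig t (Suc l))
                          - xstar_seq n G (\<alpha> t) xs (sig t) (Suc l)))\<^sup>2)
         \<le> (1 - \<alpha> t * \<mu> / 2) * measure_pmf.expectation (perm_pmf n m t)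
              (\<lambda>sig. (norm (avg n (drr_x n m w G \<alpha> x0 sig t l)
                          - xstar_seq n G (\<alpha> t) xs (sig t) l))\<^sup>2)
           + 2 * \<alpha> t * sigma_shuffle n m f G \<alpha> xs t
           + 2 * \<alpha> t * L\<^sup>2 / real n * (1 / \<mu> + \<alpha> t) *
             measure_pmf.expectation (perm_pmf n m t)
              (\<lambda>sig. \<Sum>i<n. (norm (drr_x n m w G \<alpha> x0 sig t l i
                               - avg n (drr_x n m w G \<alpha> x0 sig t l)))\<^sup>2)"
proof -
  define S where "S = perm_space n m t"
  have Sfin: "finite S" and Sne: "S \<noteq> {}" using perm_space_finite perm_space_nonempty S_def by auto
  have cS: "real (card S) > 0" using Sfin Sne by (simp add: card_gt_0_iff)
  have E: "measure_pmf.expectation (perm_pmf n m t) h = sum h S / real (card S)" for h :: "_ \<Rightarrow> real"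
    unfolding perm_pmf_def S_def[symmetric] by (rule integral_pmf_of_set[OF Sne Sfin])
  define a where "a = \<alpha> t"
  define P where "P sig = (norm (avg n (drr_x n m w G \<alpha> x0 sig t (Suc l))
                          - xstar_seq n G (\<alpha> t) xs (sig t) (Suc l)))\<^sup>2" for sig
  define A where "A sig = (norm (avg n (drr_x n m w G \<alpha> x0 sig t l)
                          - xstar_seq n G (\<alpha> t) xs (sig t) l))\<^sup>2" for sig
  define B where "B sig = breg n f G (\<alpha> t) xs (sig t) l" for sig
  define C where "C sig = (\<Sum>i<n. (norm (drr_x n m w G \<alpha> x0 sig t l i
                               - avg n (drr_x n m w G \<alpha> x0 sig t l)))\<^sup>2)" for sig
  define K where "K = 2 * a * L\<^sup>2 / real n * (1 / \<mu> + a)"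
  have L0: "L > 0" using mu_pos mu_le_L by linarith
  have pw: "P sig \<le> (1 - a * \<mu> / 2) * A sig + 2 * a * B sig + K * C sig" if sig: "sig \<in> S" for sig
  proof -
    define pe where "pe = sig t"
    have pl: "pe i l < m" if i: "i < n" for i
    proof -
      have "pe i permutes {..<m}" using sig i by (simp add: S_def perm_space_def pe_def)
      then show ?thesis using l_lt permutes_in_image by fastforce
    qed
    define x where "x = drr_x n m w G \<alpha> x0 sig t l"
    have xsuc: "drr_x n m w G \<alpha> x0 sig t (Suc l) = (\<lambda>i. \<Sum>j<n. w i j *\<^sub>R (x j - a *\<^sub>R G j (pe j l) (x j)))"
      by (intro ext) (simp add: x_def drr_x_def a_def pe_def)
    have avg_suc: "avg n (drr_x n m w G \<alpha> x0 sig t (Suc l)) = avg n x - a *\<^sub>R avg n (\<lambda>i. G i (pe i l) (x i))"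
    proof -
      have "avg n (\<lambda>i. \<Sum>j<n. w i j *\<^sub>R (x j - a *\<^sub>R G j (pe j l) (x j)))
            = avg n (\<lambda>j. x j - a *\<^sub>R G j (pe j l) (x j))"
        by (rule avg_mix[OF w_sym w_stoch])
      also have "\<dots> = avg n x - avg n (\<lambda>j. a *\<^sub>R G j (pe j l) (x j))"
        by (rule avg_diff)
      also have "avg n (\<lambda>j. a *\<^sub>R G j (pe j l) (x j)) = a *\<^sub>R avg n (\<lambda>j. G j (pe j l) (x j))"
        by (simp add: avg_def scaleR_sum_right)
      finally show ?thesis unfolding xsuc .
    qed
    have zsuc: "xstar_seq n G (\<alpha> t) xs (sig t) (Suc l) = xstar_seq n G (\<alpha> t) xs (sig t) l - a *\<^sub>R avg n (\<lambda>i. G i (pe i l) xs)"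
      by (simp add: xstar_seq_def a_def pe_def algebra_simps)
    have Beq: "B sig = (1 / real n) * (\<Sum>i<n. f i (pe i l) (xstar_seq n G (\<alpha> t) xs (sig t) l))
             - (1 / real n) * (\<Sum>i<n. f i (pe i l) xs)
             - inner (avg n (\<lambda>i. G i (pe i l) xs)) (xstar_seq n G (\<alpha> t) xs (sig t) l - xs)"
      by (simp add: B_def breg_def Let_def pe_def)
    have main: "(norm ((avg n x - a *\<^sub>R avg n (\<lambda>i. G i (pe i l) (x i)))
          - (xstar_seq n G (\<alpha> t) xs (sig t) l - a *\<^sub>R avg n (\<lambda>i. G i (pe i l) xs))))\<^sup>2
     \<le> (1 - a * \<mu> / 2) * (norm (avg n x - xstar_seq n G (\<alpha> t) xs (sig t) l))\<^sup>2
       + 2 * a * ((1 / real n) * (\<Sum>i<n. f i (pe i l) (xstar_seq n G (\<alpha> t) xs (sig t) l))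
                 - (1 / real n) * (\<Sum>i<n. f i (pe i l) xs)
                 - inner (avg n (\<lambda>i. G i (pe i l) xs)) (xstar_seq n G (\<alpha> t) xs (sig t) l - xs))
       + 2 * a * L\<^sup>2 / real n * (1 / \<mu> + a) * (\<Sum>i<n. (norm (x i - avg n x))\<^sup>2)"
      by (rule pathwise[where F="\<lambda>i. f i (pe i l)" and g="\<lambda>i. G i (pe i l)"])
         (use n_pos grad strong lips pl mu_pos mu_le_L alpha_pos alpha_le a_def in auto)
    show ?thesis
      using main unfolding P_def A_def C_def K_def avg_suc zsuc Beq x_def[symmetric] by simp
  qed
  have "sum P S \<le> sum (\<lambda>sig. (1 - a * \<mu> / 2) * A sig + 2 * a * B sig + K * C sig) S"
    using pw by (rule sum_mono)
  also have "\<dots> = (1 - a * \<mu> / 2) * sum A S + 2 * a * sum B S + K * sum C S"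
    by (simp add: sum.distrib sum_distrib_left)
  finally have s: "sum P S / real (card S) \<le> ((1 - a * \<mu> / 2) * sum A S + 2 * a * sum B S + K * sum C S) / real (card S)"
    using cS by (intro divide_right_mono) auto
  have EB: "sum B S / real (card S) \<le> sigma_shuffle n m f G \<alpha> xs t"
  proof -
    have "sum B S / real (card S) = measure_pmf.expectation (perm_pmf n m t) (\<lambda>sig. breg n f G (\<alpha> t) xs (sig t) l)"
      by (simp add: E B_def)
    also have "\<dots> \<le> sigma_shuffle n m f G \<alpha> xs t"
      unfolding sigma_shuffle_def using l_lt by (intro Max_ge) auto
    finally show ?thesis .
  qed
  have a0: "a > 0" using alpha_pos a_def by simp
  have "sum P S / real (card S) \<le> (1 - a * \<mu> / 2) * (sum A S / real (card S)) + 2 * a * (sum B S / real (card S))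
          + K * (sum C S / real (card S))"
    using s by (simp add: add_divide_distrib)
  also have "\<dots> \<le> (1 - a * \<mu> / 2) * (sum A S / real (card S)) + 2 * a * sigma_shuffle n m f G \<alpha> xs t
          + K * (sum C S / real (card S))"
  proof -
    have "2 * a * (sum B S / real (card S)) \<le> 2 * a * sigma_shuffle n m f G \<alpha> xs t"
      using EB a0 by (intro mult_left_mono) auto
    then show ?thesis by linarith
  qed
  finally show ?thesis
    unfolding E P_def[symmetric] A_def[symmetric] C_def[symmetric] K_def a_def by simp
qed

end
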